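(* Let $q$ be a prime power, $n=q^4-1$, and let $I_x$ be a cyclotomic coset of cardinality $2$ with minimal representative $x$. Then $I_x$ is an SR-asymmetric coset if and only if there exists $z\in I_x$ such that $n-qz<x$ (where $n-qz$ is reduced modulo $n$ into $\{0,\ldots,n-1\}$).
   Context: Identify $\mathbb{Z}_n$ with $\{0,\ldots,n-1\}$, all arithmetic modulo $n$. The cyclotomic coset of $x$ with respect to $q^2$ is $I_x=\{x,\,q^2x\bmod n\}$; its minimal representative is its least element. The (Hermitian) reciprocal coset of $I_x$ is $I_{n-qx}$. $I_x$ is symmetric if $I_{n-qx}=I_x$ and asymmetric otherwise. If $I_x$ is asymmetric with reciprocal coset $I_y$, with $x,y$ the minimal representatives and $x<y$, then $I_x$ is the FR-asymmetric coset and $I_y$ the SR-asymmetric coset of the pair. *)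

theory Defs
  imports "HOL-Computational_Algebra.Primes"
begin

text \<open>Elements of Z_n are represented by naturals in {0..n-1}.\<close>

definition prime_power :: "nat \<Rightarrow> bool" where
  "prime_power q \<longleftrightarrow> (\<exists>p k. prime p \<and> k \<ge> 1 \<and> q = p ^ k)"

definition cyc_coset :: "nat \<Rightarrow> nat \<Rightarrow> nat \<Rightarrow> nat set" where
  "cyc_coset n q x = {x mod n, (q^2 * x) mod n}"

definition recip_elem :: "nat \<Rightarrow> nat \<Rightarrow> nat \<Rightarrow> nat" where
  "recip_elem n q x = (n - (q * x) mod n) mod n"

definition min_rep :: "nat \<Rightarrow> nat \<Rightarrow> nat \<Rightarrow> nat" where
  "min_rep n q x = Min (cyc_coset n q x)"

definition symmetric_coset :: "nat \<Rightarrow> nat \<Rightarrow> nat \<Rightarrow> bool" where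
  "symmetric_coset n q x \<longleftrightarrow> cyc_coset n q (recip_elem n q x) = cyc_coset n q x"

definition SR_asymmetric :: "nat \<Rightarrow> nat \<Rightarrow> nat \<Rightarrow> bool" where
  "SR_asymmetric n q x \<longleftrightarrow> \<not> symmetric_coset n q x \<and>
     min_rep n q (recip_elem n q x) < min_rep n q x"

end

theory Submission
  imports Defs
begin

lemma recip_int:
  assumes "0 < n"
  shows "int (recip_elem n q x) = (- (int q * int x)) mod int n"
proof (cases "(q*x) mod n = 0")
  case True
  then have "int (q*x) mod int n = 0" by (metis of_nat_0 of_nat_mod)
  then have "(- (int q * int x)) mod int n = 0"
    by (simp add: zmod_zminus1_eq_if)
  then show ?thesis using True by (simp add: recip_elem_def)
next
  case False
  then have "int (q*x) mod int n \<noteq> 0" by (metis of_nat_0 of_nat_eq_iff of_nat_mod)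
  then have "(- (int q * int x)) mod int n = int n - int (q*x) mod int n"
    by (simp add: zmod_zminus1_eq_if)
  moreover have "n - (q*x) mod n < n" using False assms by simp
  moreover have "(q*x) mod n < n" using assms by simp
  ultimately show ?thesis
    by (simp add: recip_elem_def of_nat_mod of_nat_diff)
qed

lemma recip_lt: "0 < n \<Longrightarrow> recip_elem n q x < n"
  by (simp add: recip_elem_def)

lemma recip_coset:
  assumes "0 < n"
  shows "cyc_coset n q (recip_elem n q x) = {recip_elem n q x, recip_elem n q (q^2*x mod n)}"
proof -
  have a: "recip_elem n q x mod n = recip_elem n q x" using recip_lt[OF assms] by simp
  have "int (q^2 * recip_elem n q x mod n) = (int q^2 * ((- (int q * int x)) mod int n)) mod int n"
    using recip_int[OF assms] by (simp add: of_nat_mod)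
  also have "\<dots> = (- (int q * (int q^2 * int x))) mod int n"
    by (simp add: mod_mult_right_eq algebra_simps)
  also have "\<dots> = (- (int q * ((int q^2 * int x) mod int n))) mod int n"
    by (metis mod_minus_eq mod_mult_right_eq)
  also have "\<dots> = int (recip_elem n q (q^2*x mod n))"
    using recip_int[OF assms] by (simp add: of_nat_mod)
  finally have "q^2 * recip_elem n q x mod n = recip_elem n q (q^2*x mod n)"
    using of_nat_eq_iff by blast
  then show ?thesis using a by (simp add: cyc_coset_def)
qed

theorem mainTheorem10:
  fixes q n x :: nat
  assumes "prime_power q"
    and "n = q ^ 4 - 1"
    and "x < n"
    and "card (cyc_coset n q x) = 2"
    and "x = min_rep n q x"
  shows "SR_asymmetric n q x \<longleftrightarrow> (\<exists>z \<in> cyc_coset n q x. recip_elem n q z < x)"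
proof -
  have n0: "0 < n" using assms(3) by simp
  have cx: "cyc_coset n q x = {x, q^2*x mod n}" using assms(3) by (simp add: cyc_coset_def)
  have mr: "min_rep n q (recip_elem n q x) = Min {recip_elem n q x, recip_elem n q (q^2*x mod n)}"
    using recip_coset[OF n0] by (simp add: min_rep_def)
  have iff: "min_rep n q (recip_elem n q x) < x \<longleftrightarrow> (\<exists>z \<in> cyc_coset n q x. recip_elem n q z < x)"
    unfolding mr cx by (auto simp: min_def)
  have "symmetric_coset n q x \<Longrightarrow> min_rep n q (recip_elem n q x) = x"
    using assms(5) by (simp add: symmetric_coset_def min_rep_def)
  then show ?thesis using iff assms(5) unfolding SR_asymmetric_def by (metis less_irrefl)
qed

end
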